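(* Let $f$ be a Boolean formula whose clauses $c$ are CNF, cardinality, XOR or NAE constraints over $x_1,\dots,x_n$, and let $F=F_f=\sum_{c}\mathrm{FE}_c$. If $a^\star\in[-1,1]^n$ is a local minimum of $F$ in $[-1,1]^n$, then $a^\star$ is a feasible solution of $F$.
   Context: Boolean values are encoded as $\pm1$, with $-1$ standing for True. Each clause $c$ is regarded as a function $\{\pm1\}^n\to\{\pm1\}$ with value $-1$ exactly when satisfied. $\mathrm{FE}_c$ is its Fourier expansion, i.e. the unique multilinear polynomial agreeing with $c$ on $\{\pm1\}^n$. Local minimum: $a$ is a local minimum of $F$ in a set $\Delta$ if there is $\delta>0$ such that $F(a)\le F(a')$ for all $a'\in\Delta$ with $\|a-a'\|_2^2\le\delta$. Feasibility: for $a\in[-1,1]^n$, let $I=\{i: a_i\in\{\pm1\}\}$. Let $F_{I\gets a_I}$ be the polynomial obtained from $F$ by fixing $x_i=a_i$ for every $i\in I$. Then $a$ is feasible if $F_{I\gets a_I}$ is a constant polynomial. *)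

theory Defs
  imports Complex_Main "HOL-Library.FuncSet"
begin

text \<open>Variables x_1..x_n are indexed by 0..<n.  A point is a function nat => real;
  only the coordinates below n matter.  -1 stands for True.\<close>

type_synonym literal = "nat \<times> bool"

definition lit_val :: "literal \<Rightarrow> (nat \<Rightarrow> real) \<Rightarrow> real" where
  "lit_val l y = (if snd l then y (fst l) else - y (fst l))"

definition lit_true :: "literal \<Rightarrow> (nat \<Rightarrow> real) \<Rightarrow> bool" where
  "lit_true l y \<longleftrightarrow> lit_val l y = -1"

datatype clause =
    CNF "literal list"
  | Card "literal list" nat
  | XOR "literal list"
  | NAE "literal list"

fun clause_lits :: "clause \<Rightarrow> literal list" where
  "clause_lits (CNF ls) = ls"
| "clause_lits (Card ls k) = ls"
| "clause_lits (XOR ls) = ls"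
| "clause_lits (NAE ls) = ls"

definition clause_vars :: "clause \<Rightarrow> nat set" where
  "clause_vars c = fst ` set (clause_lits c)"

fun clause_sat :: "clause \<Rightarrow> (nat \<Rightarrow> real) \<Rightarrow> bool" where
  "clause_sat (CNF ls) y = (\<exists>l\<in>set ls. lit_true l y)"
| "clause_sat (Card ls k) y = (k \<le> length (filter (\<lambda>l. lit_true l y) ls))"
| "clause_sat (XOR ls) y = odd (length (filter (\<lambda>l. lit_true l y) ls))"
| "clause_sat (NAE ls) y = ((\<exists>l\<in>set ls. lit_true l y) \<and> (\<exists>l\<in>set ls. \<not> lit_true l y))"

definition clause_fun :: "clause \<Rightarrow> (nat \<Rightarrow> real) \<Rightarrow> real" where
  "clause_fun c y = (if clause_sat c y then -1 else 1)"

text \<open>A multilinear polynomial is given by its coefficient function on monomials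
  (subsets S of {..<n}, monomial = product of x_i over i in S).\<close>
type_synonym mlpoly = "nat set \<Rightarrow> real"

definition mlpoly_eval :: "nat \<Rightarrow> mlpoly \<Rightarrow> (nat \<Rightarrow> real) \<Rightarrow> real" where
  "mlpoly_eval n p x = (\<Sum>S\<in>Pow {..<n}. p S * (\<Prod>i\<in>S. x i))"

definition hcube :: "nat \<Rightarrow> (nat \<Rightarrow> real) set" where
  "hcube n = {0..<n} \<rightarrow>\<^sub>E {-1, 1}"

definition FE :: "nat \<Rightarrow> ((nat \<Rightarrow> real) \<Rightarrow> real) \<Rightarrow> mlpoly" where
  "FE n g S = (if S \<subseteq> {..<n}
      then (\<Sum>y\<in>hcube n. g y * (\<Prod>i\<in>S. y i)) / 2 ^ n else 0)"

definition formula_poly :: "nat \<Rightarrow> clause list \<Rightarrow> mlpoly" where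
  "formula_poly n f S = (\<Sum>c\<leftarrow>f. FE n (clause_fun c) S)"

definition F_eval :: "nat \<Rightarrow> clause list \<Rightarrow> (nat \<Rightarrow> real) \<Rightarrow> real" where
  "F_eval n f x = mlpoly_eval n (formula_poly n f) x"

definition box :: "nat \<Rightarrow> (nat \<Rightarrow> real) set" where
  "box n = {a. \<forall>i<n. -1 \<le> a i \<and> a i \<le> 1}"

definition sqdist :: "nat \<Rightarrow> (nat \<Rightarrow> real) \<Rightarrow> (nat \<Rightarrow> real) \<Rightarrow> real" where
  "sqdist n a b = (\<Sum>i<n. (a i - b i)^2)"

definition local_min_in :: "nat \<Rightarrow> ((nat \<Rightarrow> real) \<Rightarrow> real) \<Rightarrow> (nat \<Rightarrow> real) set \<Rightarrow> (nat \<Rightarrow> real) \<Rightarrow> bool" where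
  "local_min_in n F D a \<longleftrightarrow> a \<in> D \<and>
     (\<exists>\<delta>>0. \<forall>a'\<in>D. sqdist n a a' \<le> \<delta> \<longrightarrow> F a \<le> F a')"

text \<open>Substitution x_i := a_i for i in I: the resulting polynomial in the remaining
  variables has, at monomial T (disjoint from I), coefficient
  sum over S with S - I = T of p(S) * prod_(i in S cap I) a_i.\<close>
definition mlpoly_subst :: "nat \<Rightarrow> mlpoly \<Rightarrow> nat set \<Rightarrow> (nat \<Rightarrow> real) \<Rightarrow> mlpoly" where
  "mlpoly_subst n p I a T = (if T \<subseteq> {..<n} \<and> T \<inter> I = {}
      then (\<Sum>S\<in>{S\<in>Pow {..<n}. S - I = T}. p S * (\<Prod>i\<in>S \<inter> I. a i)) else 0)"

definition mlpoly_const :: "nat \<Rightarrow> mlpoly \<Rightarrow> bool" where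
  "mlpoly_const n p \<longleftrightarrow> (\<forall>T\<subseteq>{..<n}. T \<noteq> {} \<longrightarrow> p T = 0)"

definition fixed_coords :: "nat \<Rightarrow> (nat \<Rightarrow> real) \<Rightarrow> nat set" where
  "fixed_coords n a = {i. i < n \<and> (a i = 1 \<or> a i = -1)}"

definition feasible :: "nat \<Rightarrow> mlpoly \<Rightarrow> (nat \<Rightarrow> real) \<Rightarrow> bool" where
  "feasible n p a \<longleftrightarrow> a \<in> box n \<and> mlpoly_const n (mlpoly_subst n p (fixed_coords n a) a)"

end

theory Submission imports Defs begin

lemma subst_eval:
  assumes I: "I \<subseteq> {..<n}" and xa: "\<forall>i\<in>I. x i = a i"
  shows "mlpoly_eval n p x = mlpoly_eval n (mlpoly_subst n p I a) x"
proof -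
  let ?D = "{T\<in>Pow {..<n}. T \<inter> I = {}}"
  have fP: "finite (Pow {..<n::nat})" by simp
  have "mlpoly_eval n (mlpoly_subst n p I a) x
      = (\<Sum>T\<in>?D. mlpoly_subst n p I a T * (\<Prod>i\<in>T. x i))"
    unfolding mlpoly_eval_def
    by (rule sum.mono_neutral_right) (auto simp: mlpoly_subst_def)
  also have "\<dots> = (\<Sum>T\<in>?D. \<Sum>S\<in>{S\<in>Pow {..<n}. S - I = T}. p S * (\<Prod>i\<in>S \<inter> I. a i) * (\<Prod>i\<in>S - I. x i))"
    by (rule sum.cong[OF refl]) (auto simp: mlpoly_subst_def sum_distrib_right)
  also have "\<dots> = (\<Sum>S\<in>Pow {..<n}. p S * (\<Prod>i\<in>S \<inter> I. a i) * (\<Prod>i\<in>S - I. x i))"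
    by (rule sum.group) auto
  also have "\<dots> = mlpoly_eval n p x"
    unfolding mlpoly_eval_def
  proof (rule sum.cong[OF refl])
    fix S assume S: "S \<in> Pow {..<n}"
    then have fS: "finite S" by (auto intro: finite_subset)
    have "(\<Prod>i\<in>S. x i) = (\<Prod>i\<in>S \<inter> I. x i) * (\<Prod>i\<in>S - I. x i)"
      by (rule prod.Int_Diff[OF fS])
    also have "(\<Prod>i\<in>S \<inter> I. x i) = (\<Prod>i\<in>S \<inter> I. a i)"
      using xa by (intro prod.cong) auto
    finally show "p S * (\<Prod>i\<in>S \<inter> I. a i) * (\<Prod>i\<in>S - I. x i) = p S * (\<Prod>i\<in>S. x i)"
      by simp
  qed
  finally show ?thesis ..
qed

lemma weighted_sum:
  fixes q :: mlpoly
  assumes T: "T \<subseteq> {..<n}"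
  shows "(\<Sum>s\<in>T \<rightarrow>\<^sub>E {-1,1}. (\<Prod>i\<in>T. w (s i)) * mlpoly_eval n q (\<lambda>i. if i\<in>T then a i + t * s i else a i))
        = (\<Sum>U\<in>Pow {..<n}. q U * (\<Prod>i\<in>U-T. a i) * (\<Prod>i\<in>T. \<Sum>v\<in>{-1,1}. w v * (if i\<in>U then a i + t*v else 1)))"
proof -
  have fin: "finite T" using T finite_subset by blast
  have prodU: "(\<Prod>i\<in>U. (if i\<in>T then a i + t*s i else a i)) = (\<Prod>i\<in>U-T. a i) * (\<Prod>i\<in>T. (if i\<in>U then a i + t*s i else 1))"
    if U: "U \<in> Pow {..<n}" for s U
  proof -
    have fU: "finite U" using U by (auto intro: finite_subset)
    have "(\<Prod>i\<in>U. (if i\<in>T then a i + t*s i else a i)) = (\<Prod>i\<in>U \<inter> T. (if i\<in>T then a i + t*s i else a i)) * (\<Prod>i\<in>U - T. (if i\<in>T then a i + t*s i else a i))"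
      by (rule prod.Int_Diff[OF fU])
    also have "(\<Prod>i\<in>U \<inter> T. (if i\<in>T then a i + t*s i else a i)) = (\<Prod>i\<in>U \<inter> T. a i + t*s i)"
      by (intro prod.cong) auto
    also have "\<dots> = (\<Prod>i\<in>{i\<in>T. i \<in> U}. a i + t*s i)"
      by (intro prod.cong) auto
    also have "\<dots> = (\<Prod>i\<in>T. (if i\<in>U then a i + t*s i else 1))"
      by (rule prod.inter_filter[OF fin])
    also have "(\<Prod>i\<in>U - T. (if i\<in>T then a i + t*s i else a i)) = (\<Prod>i\<in>U-T. a i)"
      by (intro prod.cong) auto
    finally show ?thesis by simp
  qed
  have "(\<Sum>s\<in>T \<rightarrow>\<^sub>E {-1,1}. (\<Prod>i\<in>T. w (s i)) * mlpoly_eval n q (\<lambda>i. if i\<in>T then a i + t * s i else a i))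
     = (\<Sum>s\<in>T \<rightarrow>\<^sub>E {-1,1}. \<Sum>U\<in>Pow {..<n}. q U * (\<Prod>i\<in>U-T. a i) * (\<Prod>i\<in>T. w (s i) * (if i\<in>U then a i + t*s i else 1)))"
    unfolding mlpoly_eval_def sum_distrib_left
    by (intro sum.cong refl) (simp add: prodU prod.distrib)
  also have "\<dots> = (\<Sum>U\<in>Pow {..<n}. \<Sum>s\<in>T \<rightarrow>\<^sub>E {-1,1}. q U * (\<Prod>i\<in>U-T. a i) * (\<Prod>i\<in>T. w (s i) * (if i\<in>U then a i + t*s i else 1)))"
    by (rule sum.swap)
  also have "\<dots> = (\<Sum>U\<in>Pow {..<n}. q U * (\<Prod>i\<in>U-T. a i) * (\<Prod>i\<in>T. \<Sum>v\<in>{-1,1}. w v * (if i\<in>U then a i + t*v else 1)))"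
  proof (intro sum.cong refl)
    fix U
    have "(\<Sum>s\<in>T \<rightarrow>\<^sub>E {-1,1}. (\<Prod>i\<in>T. w (s i) * (if i\<in>U then a i + t*s i else 1)))
      = (\<Prod>i\<in>T. \<Sum>v\<in>{-1,1}. w v * (if i\<in>U then a i + t*v else 1))"
      using prod_sum_PiE[OF fin, of "\<lambda>_. {-1,1::real}" "\<lambda>i v. w v * (if i\<in>U then a i + t*v else 1)"]
      by simp
    then show "(\<Sum>s\<in>T \<rightarrow>\<^sub>E {-1,1}. q U * (\<Prod>i\<in>U-T. a i) * (\<Prod>i\<in>T. w (s i) * (if i\<in>U then a i + t*s i else 1)))
      = q U * (\<Prod>i\<in>U-T. a i) * (\<Prod>i\<in>T. \<Sum>v\<in>{-1,1}. w v * (if i\<in>U then a i + t*v else 1))"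
      by (simp add: sum_distrib_left[symmetric])
  qed
  finally show ?thesis .
qed

lemma core:
  fixes q :: mlpoly
  assumes T: "T \<subseteq> {..<n}" "T \<noteq> {}"
    and maxl: "\<forall>U\<in>Pow {..<n}. T \<subset> U \<longrightarrow> q U = 0"
    and t: "t > 0"
    and mn: "\<forall>s\<in>T \<rightarrow>\<^sub>E {-1,1}. mlpoly_eval n q a \<le> mlpoly_eval n q (\<lambda>i. if i\<in>T then a i + t * s i else a i)"
  shows "q T = 0"
proof -
  define G where "G = mlpoly_eval n q"
  define y where "y = (\<lambda>s::nat\<Rightarrow>real. \<lambda>i. if i\<in>T then a i + t * s i else a i)"
  let ?Y = "T \<rightarrow>\<^sub>E {-1,1::real}"
  have fin: "finite T" using T finite_subset by blast
  have finY: "finite ?Y" using fin by (simp add: finite_PiE)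
  have cardY: "card ?Y = 2 ^ card T" using fin by (simp add: card_PiE numeral_2_eq_2)
  have A0: "(\<Sum>s\<in>?Y. (\<Prod>i\<in>T. (\<lambda>_. 1::real) (s i)) * G (y s))
     = (\<Sum>U\<in>Pow {..<n}. q U * (\<Prod>i\<in>U-T. a i) * (\<Prod>i\<in>T. \<Sum>v\<in>{-1,1}. (\<lambda>_. 1::real) v * (if i\<in>U then a i + t*v else 1)))"
    unfolding G_def y_def by (rule weighted_sum[OF T(1)])
  have A1: "(\<Prod>i\<in>U-T. a i) * (\<Prod>i\<in>T. \<Sum>v\<in>{-1,1}. (\<lambda>_. 1::real) v * (if i\<in>U then a i + t*v else 1))
      = 2 ^ card T * (\<Prod>i\<in>U. a i)" if U: "U \<in> Pow {..<n}" for U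
  proof -
    have fU: "finite U" using U by (auto intro: finite_subset)
    have "(\<Prod>i\<in>T. \<Sum>v\<in>{-1,1}. (\<lambda>_. 1::real) v * (if i\<in>U then a i + t*v else 1))
        = (\<Prod>i\<in>T. 2 * (if i\<in>U then a i else 1))"
      by (intro prod.cong refl) auto
    also have "\<dots> = 2 ^ card T * (\<Prod>i\<in>T. (if i\<in>U then a i else 1))"
      by (simp add: prod.distrib)
    also have "(\<Prod>i\<in>T. (if i\<in>U then a i else 1)) = (\<Prod>i\<in>{i\<in>T. i\<in>U}. a i)"
      by (rule prod.inter_filter[OF fin, symmetric])
    also have "{i\<in>T. i\<in>U} = U \<inter> T" by auto
    finally have "(\<Prod>i\<in>T. \<Sum>v\<in>{-1,1}. (\<lambda>_. 1::real) v * (if i\<in>U then a i + t*v else 1))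
        = 2 ^ card T * (\<Prod>i\<in>U \<inter> T. a i)" .
    moreover have "(\<Prod>i\<in>U. a i) = (\<Prod>i\<in>U \<inter> T. a i) * (\<Prod>i\<in>U - T. a i)"
      by (rule prod.Int_Diff[OF fU])
    ultimately show ?thesis by simp
  qed
  have A: "(\<Sum>s\<in>?Y. G (y s)) = 2 ^ card T * G a"
  proof -
    have "(\<Sum>s\<in>?Y. G (y s)) = (\<Sum>U\<in>Pow {..<n}. q U * (2 ^ card T * (\<Prod>i\<in>U. a i)))"
      using A0 A1 by (simp add: mult.assoc)
    also have "\<dots> = 2 ^ card T * G a"
      unfolding G_def mlpoly_eval_def sum_distrib_left by (intro sum.cong refl) simp
    finally show ?thesis .
  qed
  have all_eq: "\<forall>s\<in>?Y. G (y s) - G a = 0"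
  proof -
    have "(\<Sum>s\<in>?Y. G (y s) - G a) = 0"
      using A cardY by (simp add: sum_subtractf)
    moreover have "\<forall>s\<in>?Y. 0 \<le> G (y s) - G a"
    proof
      fix s assume "s \<in> ?Y"
      from mn[rule_format, OF this] show "0 \<le> G (y s) - G a" unfolding G_def y_def by simp
    qed
    ultimately show ?thesis using sum_nonneg_eq_0_iff[OF finY, of "\<lambda>s. G (y s) - G a"] by simp
  qed
  have B0: "(\<Sum>s\<in>?Y. (\<Prod>i\<in>T. (\<lambda>v. v) (s i)) * G (y s))
     = (\<Sum>U\<in>Pow {..<n}. q U * (\<Prod>i\<in>U-T. a i) * (\<Prod>i\<in>T. \<Sum>v\<in>{-1,1}. (\<lambda>v. v) v * (if i\<in>U then a i + t*v else 1)))"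
    unfolding G_def y_def by (rule weighted_sum[OF T(1)])
  have B1: "(\<Prod>i\<in>T. \<Sum>v\<in>{-1,1}. (\<lambda>v. v) v * (if i\<in>U then a i + t*v else 1))
      = (if T \<subseteq> U then (2*t) ^ card T else 0)" for U
  proof -
    have "(\<Prod>i\<in>T. \<Sum>v\<in>{-1,1}. (\<lambda>v. v) v * (if i\<in>U then a i + t*v else 1))
       = (\<Prod>i\<in>T. (if i\<in>U then 2*t else 0))"
      by (intro prod.cong refl) (simp add: algebra_simps)
    also have "\<dots> = (if T \<subseteq> U then (2*t) ^ card T else 0)"
      proof (cases "T \<subseteq> U")
        case True then show ?thesis by (simp add: subset_eq)
      next
        case False then obtain j where "j \<in> T" "j \<notin> U" by blast
        then show ?thesis using fin False by (auto simp: prod_zero_iff)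
      qed
    finally show ?thesis .
  qed
  have B: "(\<Sum>s\<in>?Y. (\<Prod>i\<in>T. s i) * G (y s)) = q T * (2*t) ^ card T"
  proof -
    have "(\<Sum>s\<in>?Y. (\<Prod>i\<in>T. s i) * G (y s))
        = (\<Sum>U\<in>Pow {..<n}. q U * (\<Prod>i\<in>U-T. a i) * (if T \<subseteq> U then (2*t) ^ card T else 0))"
      using B0 B1 by simp
    also have "\<dots> = (\<Sum>U\<in>{T}. q U * (\<Prod>i\<in>U-T. a i) * (if T \<subseteq> U then (2*t) ^ card T else 0))"
    proof (rule sum.mono_neutral_right)
      show "\<forall>U\<in>Pow {..<n} - {T}. q U * (\<Prod>i\<in>U-T. a i) * (if T \<subseteq> U then (2*t) ^ card T else 0) = 0"
        using maxl by (auto simp: psubset_eq)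
    qed (use T in auto)
    also have "\<dots> = q T * (2*t) ^ card T" by simp
    finally show ?thesis .
  qed
  have B': "(\<Sum>s\<in>?Y. (\<Prod>i\<in>T. s i) * G (y s)) = 0"
  proof -
    have "(\<Sum>s\<in>?Y. (\<Prod>i\<in>T. s i) * G (y s)) = (\<Sum>s\<in>?Y. (\<Prod>i\<in>T. s i)) * G a"
      unfolding sum_distrib_right using all_eq by (intro sum.cong refl) auto
    also have "(\<Sum>s\<in>?Y. (\<Prod>i\<in>T. s i)) = (\<Prod>i\<in>T. \<Sum>v\<in>{-1,1::real}. v)"
      using prod_sum_PiE[OF fin, of "\<lambda>_. {-1,1::real}" "\<lambda>i v. v"] by simp
    also have "\<dots> = 0" using fin T(2) by (simp add: card_gt_0_iff)
    finally show ?thesis by simp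
  qed
  from B B' have "q T * (2*t) ^ card T = 0" by simp
  then show ?thesis using t by simp
qed


theorem lemma6:
  fixes n :: nat and f :: "clause list" and a :: "nat \<Rightarrow> real"
  assumes "\<forall>c\<in>set f. clause_vars c \<subseteq> {..<n}"
    and "a \<in> box n"
    and "local_min_in n (F_eval n f) (box n) a"
  shows "feasible n (formula_poly n f) a"
proof -
  define P where "P = formula_poly n f"
  define I where "I = fixed_coords n a"
  define q where "q = mlpoly_subst n P I a"
  have I_sub: "I \<subseteq> {..<n}" unfolding I_def fixed_coords_def by auto
  have Feq: "F_eval n f x = mlpoly_eval n q x" if "\<forall>i\<in>I. x i = a i" for x
    unfolding F_eval_def q_def P_def using subst_eval[OF I_sub that] .
  obtain \<delta> where d: "\<delta> > 0" and dmin: "\<forall>a'\<in>box n. sqdist n a a' \<le> \<delta> \<longrightarrow> F_eval n f a \<le> F_eval n f a'"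
    using assms(3) unfolding local_min_in_def by blast
  have "\<forall>T\<subseteq>{..<n}. T \<noteq> {} \<longrightarrow> q T = 0"
  proof (rule ccontr)
    assume neg: "\<not> (\<forall>T\<subseteq>{..<n}. T \<noteq> {} \<longrightarrow> q T = 0)"
    define C where "C = {T\<in>Pow {..<n}. T \<noteq> {} \<and> q T \<noteq> 0}"
    have Cne: "C \<noteq> {}" using neg unfolding C_def by auto
    have Cfin: "finite C" unfolding C_def by simp
    define m where "m = Max (card ` C)"
    have "m \<in> card ` C" unfolding m_def using Cne Cfin by (intro Max_in) auto
    then obtain T where TC: "T \<in> C" and Tm: "card T = m" by auto
    have Cle: "card U \<le> card T" if "U \<in> C" for U
      using Tm Cfin that unfolding m_def by (simp add: Max_ge)
    have T: "T \<subseteq> {..<n}" "T \<noteq> {}" "q T \<noteq> 0" using TC unfolding C_def by auto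
    have finT: "finite T" using T(1) finite_subset by blast
    have TI: "T \<inter> I = {}" using T(3) unfolding q_def mlpoly_subst_def by (auto split: if_splits)
    have maxl: "\<forall>U\<in>Pow {..<n}. T \<subset> U \<longrightarrow> q U = 0"
    proof (intro ballI impI)
      fix U assume U: "U \<in> Pow {..<n}" "T \<subset> U"
      show "q U = 0"
      proof (rule ccontr)
        assume "q U \<noteq> 0"
        then have "U \<in> C" using U unfolding C_def by auto
        then have "card U \<le> card T" by (rule Cle)
        moreover have "card T < card U"
          using U by (intro psubset_card_mono) (auto intro: finite_subset)
        ultimately show False by simp
      qed
    qed
    have ain: "-1 \<le> a i \<and> a i \<le> 1" if "i < n" for i using assms(2) that unfolding box_def by auto
    have afree: "\<bar>a i\<bar> < 1" if "i \<in> T" for i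
    proof -
      have "i < n" using that T(1) by auto
      moreover have "i \<notin> I" using that TI by auto
      ultimately have "a i \<noteq> 1" "a i \<noteq> -1" unfolding I_def fixed_coords_def by auto
      with ain[OF \<open>i < n\<close>] show ?thesis by auto
    qed
    have npos: "n > 0" using T by auto
    define t where "t = min (sqrt (\<delta> / n)) (Min ((\<lambda>i. 1 - \<bar>a i\<bar>) ` T))"
    have tpos: "t > 0"
      unfolding t_def using d npos finT T(2) afree by (auto simp: Min_gr_iff)
    have t1: "t \<le> 1 - \<bar>a i\<bar>" if "i \<in> T" for i
      unfolding t_def using finT that by (auto intro: min.coboundedI2 Min_le)
    have t2: "t^2 \<le> \<delta> / n"
    proof -
      have "t \<le> sqrt (\<delta> / n)" unfolding t_def by simp
      then have "t^2 \<le> (sqrt (\<delta> / n))^2" using tpos by (intro power_mono) auto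
      also have "\<dots> = \<delta> / n" using d by simp
      finally show ?thesis .
    qed
    have mn: "\<forall>s\<in>T \<rightarrow>\<^sub>E {-1,1}. mlpoly_eval n q a \<le> mlpoly_eval n q (\<lambda>i. if i\<in>T then a i + t * s i else a i)"
    proof
      fix s assume s: "s \<in> T \<rightarrow>\<^sub>E {-1,1::real}"
      define y where "y = (\<lambda>i. if i\<in>T then a i + t * s i else a i)"
      have sv: "s i = -1 \<or> s i = 1" if "i \<in> T" for i using s that by auto
      have ybox: "y \<in> box n"
        unfolding box_def
      proof (intro CollectI allI impI)
        fix i assume i: "i < n"
        show "-1 \<le> y i \<and> y i \<le> 1"
        proof (cases "i \<in> T")
          case True
          then have "t \<le> 1 - \<bar>a i\<bar>" by (rule t1)
          then show ?thesis using sv[OF True] True tpos unfolding y_def by (auto simp: abs_if split: if_splits)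
        next
          case False then show ?thesis using ain[OF i] unfolding y_def by auto
        qed
      qed
      have "sqdist n a y = (\<Sum>i<n. if i \<in> T then t^2 else 0)"
        unfolding sqdist_def y_def
      proof (intro sum.cong refl)
        fix i assume "i \<in> {..<n}"
        show "(a i - (if i \<in> T then a i + t * s i else a i))\<^sup>2 = (if i \<in> T then t\<^sup>2 else 0)"
        proof (cases "i \<in> T")
          case True then show ?thesis using sv[OF True] by (auto simp: power2_eq_square)
        qed simp
      qed
      also have "\<dots> = card T * t^2"
        using T(1) by (simp add: sum.If_cases Int_absorb1)
      also have "\<dots> \<le> n * t^2"
        using T(1) card_mono[OF finite_lessThan T(1)] by (intro mult_right_mono) auto
      also have "\<dots> \<le> n * (\<delta> / n)" using t2 by (intro mult_left_mono) auto
      also have "\<dots> = \<delta>" using npos by simp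
      finally have "sqdist n a y \<le> \<delta>" .
      with dmin ybox have "F_eval n f a \<le> F_eval n f y" by blast
      moreover have "F_eval n f a = mlpoly_eval n q a" by (rule Feq) simp
      moreover have "F_eval n f y = mlpoly_eval n q y" by (rule Feq) (use TI in \<open>auto simp: y_def\<close>)
      ultimately show "mlpoly_eval n q a \<le> mlpoly_eval n q (\<lambda>i. if i\<in>T then a i + t * s i else a i)"
        unfolding y_def by simp
    qed
    have "q T = 0" by (rule core[OF T(1) T(2) maxl tpos mn])
    with T(3) show False by simp
  qed
  then show ?thesis
    unfolding feasible_def mlpoly_const_def q_def P_def I_def using assms(2) by simp
qed

end
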